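(* For every positive integer $d$ there is a constant $C_d$ such that for every positive integer $n$, every subposet of the $\mathbf{n^{d+1}}$-grid whose dimension is at most $d$ has at most $C_d n^d$ elements.
   Context: $[n]$ denotes $\{0,1,\ldots,n-1\}$. The $\mathbf{n^{k}}$-grid is the poset on $[n]^{k}$ with the product order: $(x_1,\ldots,x_k)\le(y_1,\ldots,y_k)$ iff $x_i\le y_i$ for all $i$. A subposet is a subset with the induced order. The dimension of a poset $P$ is the least integer $d$ such that there are $d$ linear extensions of $P$ whose intersection is $P$. *)

theory Defs
  imports Complex_Main
begin

definition grid :: "nat \<Rightarrow> nat \<Rightarrow> nat list set" where
  "grid n k = {x. length x = k \<and> (\<forall>i<k. x ! i < n)}"

definition grid_le :: "nat list rel" where
  "grid_le = {(x, y). length x = length y \<and> (\<forall>i<length x. x ! i \<le> y ! i)}"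

definition linear_extension :: "'a set \<Rightarrow> 'a rel \<Rightarrow> 'a rel \<Rightarrow> bool" where
  "linear_extension S R L \<longleftrightarrow> linear_order_on S L \<and> R \<subseteq> L"

definition order_dim :: "'a set \<Rightarrow> 'a rel \<Rightarrow> nat" where
  "order_dim S R = (LEAST k. \<exists>Ls :: nat \<Rightarrow> 'a rel.
      (\<forall>i<k. linear_extension S R (Ls i)) \<and> (S \<times> S) \<inter> (\<Inter>i<k. Ls i) = R)"

end

theory Submission
  imports Defs "HOL-Library.List_Lexorder" "HOL-Library.Product_Lexorder"
begin


lemma grid_eq: "grid n D = {xs. set xs \<subseteq> {..<n} \<and> length xs = D}"
  unfolding grid_def by (auto simp: in_set_conv_nth subset_iff)

lemma finite_grid[simp]: "finite (grid n D)"
  unfolding grid_eq by (rule finite_lists_length_eq) simp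

lemma card_grid: "card (grid n D) = n ^ D"
  unfolding grid_eq by (subst card_lists_length_eq) simp_all

definition del :: "nat \<Rightarrow> 'a list \<Rightarrow> 'a list" where
  "del m x = take m x @ drop (Suc m) x"

lemma length_del[simp]: "m < length x \<Longrightarrow> length (del m x) = length x - 1"
  unfolding del_def by simp

lemma nth_del: "m < length x \<Longrightarrow> i < length x - 1 \<Longrightarrow>
   del m x ! i = (if i < m then x ! i else x ! Suc i)"
  unfolding del_def by (auto simp: nth_append min_def)

lemma del_inj: assumes "length x = length y" "m < length x" "x ! m = y ! m" "del m x = del m y"
  shows "x = y"
proof (rule nth_equalityI)
  show "length x = length y" by fact
  fix i assume i: "i < length x"
  show "x ! i = y ! i"
  proof (cases "i < m")
    case True
    then have "del m x ! i = del m y ! i" using assms by simp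
    then show ?thesis using True i assms nth_del[of m x i] nth_del[of m y i] by auto
  next
    case False
    show ?thesis
    proof (cases "i = m")
      case True then show ?thesis using assms by simp
    next
      case False2: False
      then have "i > m" using False by simp
      then have "del m x ! (i - 1) = del m y ! (i - 1)" using assms by simp
      moreover have "i - 1 < length x - 1" "\<not> i - 1 < m" "Suc (i-1) = i" using \<open>i > m\<close> i by auto
      ultimately show ?thesis using i assms nth_del[of m x "i-1"] nth_del[of m y "i-1"] by auto
    qed
  qed
qed

lemma del_coord: assumes "m < Suc D" "m' < Suc D" "m' \<noteq> m"
  shows "\<exists>i<D. \<forall>y. length y = Suc D \<longrightarrow> del m y ! i = y ! m'"
proof (cases "m' < m")
  case True
  then show ?thesis using assms by (intro exI[of _ m']) (auto simp: nth_del)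
next
  case False
  then have "m' > m" using assms by simp
  then show ?thesis using assms by (intro exI[of _ "m' - 1"]) (auto simp: nth_del)
qed

lemma del_grid: "x \<in> grid N (Suc D) \<Longrightarrow> m < Suc D \<Longrightarrow> del m x \<in> grid N D"
  unfolding grid_def by (auto simp: nth_del)

lemma rank_embed:
  fixes P :: "nat list set" and K :: "nat set"
  assumes "finite P" "finite K" "card P \<le> card K"
  shows "\<exists>\<rho>. (\<forall>u\<in>P. \<rho> u \<in> K) \<and> (\<forall>u\<in>P. \<forall>v\<in>P. u!m < v!m \<longrightarrow> \<rho> u < \<rho> v)"
proof -
  define V where "V = (\<lambda>v. v!m) ` P"
  define r where "r u = card {w\<in>V. w < u!m}" for u
  define xs where "xs = sorted_list_of_set K"
  have lxs: "length xs = card K" unfolding xs_def by simp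
  have sxs: "sorted_wrt (<) xs" unfolding xs_def by (simp add: strict_sorted_list_of_set)
  have setxs: "set xs = K" unfolding xs_def using assms by simp
  have fV: "finite V" unfolding V_def using assms by simp
  have cV: "card V \<le> card P" unfolding V_def using assms by (simp add: card_image_le)
  have rlt: "r u < card P" if "u \<in> P" for u
  proof -
    have "{w\<in>V. w < u!m} \<subset> V" using that unfolding V_def by auto
    then have "r u < card V" unfolding r_def using fV by (simp add: psubset_card_mono)
    then show ?thesis using cV by simp
  qed
  have rmono: "r u < r v" if "u \<in> P" "v \<in> P" "u!m < v!m" for u v
  proof -
    have "{w\<in>V. w < u!m} \<subset> {w\<in>V. w < v!m}" using that unfolding V_def by auto
    then show ?thesis unfolding r_def using fV by (simp add: psubset_card_mono)
  qed
  show ?thesis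
  proof (intro exI[of _ "\<lambda>u. xs ! r u"] conjI ballI impI)
    fix u assume "u \<in> P"
    then show "xs ! r u \<in> K" using rlt[of u] lxs setxs assms(3) by (metis nth_mem order_less_le_trans)
  next
    fix u v assume "u \<in> P" "v \<in> P" "u!m < v!m"
    then show "xs ! r u < xs ! r v" using rmono rlt lxs assms(3) sxs
      by (metis order_less_le_trans sorted_wrt_nth_less)
  qed
qed



lemma lex_le_list: "length x = length (y::nat list) \<Longrightarrow> (\<forall>i<length x. x!i \<le> y!i) \<Longrightarrow> x \<le> y"
proof (induction x arbitrary: y)
  case Nil then show ?case by simp
next
  case (Cons a x)
  then obtain b y' where y: "y = b # y'" by (cases y) auto
  have ab: "a \<le> b" using Cons.prems(2)[rule_format, of 0] y by simp
  have "x \<le> y'" using Cons.IH[of y'] Cons.prems y by force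
  then show ?case using ab y by (auto simp: less_eq_list_code order_le_less)
qed

definition lexL :: "nat list set \<Rightarrow> nat \<Rightarrow> nat list rel" where
  "lexL S i = {(x,y). x \<in> S \<and> y \<in> S \<and> (x!i, x) \<le> (y!i, y)}"

lemma order_dim_exists:
  assumes "S \<subseteq> grid n D"
  shows "\<exists>k::nat. \<exists>Ls. (\<forall>i<k. linear_extension S (Restr grid_le S) (Ls i)) \<and>
     (S \<times> S) \<inter> (\<Inter>i<k. Ls i) = Restr grid_le S"
proof -
  have A: "linear_extension S (Restr grid_le S) (lexL S i)" if iD: "i < D" for i
    unfolding linear_extension_def linear_order_on_def partial_order_on_def preorder_on_def
      refl_on_def trans_def antisym_def total_on_def lexL_def
  proof (intro conjI ballI allI impI subsetI)
    fix p assume "p \<in> Restr grid_le S"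
    then obtain x y where p: "p = (x,y)" "x \<in> S" "y \<in> S" "length x = length y" "\<forall>i<length x. x!i \<le> y!i"
      unfolding grid_le_def by auto
    have "x \<le> y" using p lex_le_list by simp
    moreover have "length x = D" using p assms unfolding grid_def by auto
    ultimately show "p \<in> {(x, y). x \<in> S \<and> y \<in> S \<and> (x ! i, x) \<le> (y ! i, y)}"
      using p iD by (auto simp: less_eq_prod_def)
  qed (auto simp: less_eq_prod_def)
  have B: "S \<times> S \<inter> (\<Inter>i<D. lexL S i) = Restr grid_le S"
  proof (intro equalityI subsetI)
    fix p assume p: "p \<in> S \<times> S \<inter> (\<Inter>i<D. lexL S i)"
    then obtain x y where xy: "p = (x,y)" "x \<in> S" "y \<in> S" by auto
    have lx: "length x = D" "length y = D" using xy assms unfolding grid_def by auto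
    have "x!i \<le> y!i" if "i < D" for i
    proof -
      have "(x,y) \<in> lexL S i" using p xy that by auto
      then show ?thesis unfolding lexL_def by (auto simp: less_eq_prod_def)
    qed
    then show "p \<in> Restr grid_le S" using xy lx unfolding grid_le_def by auto
  next
    fix p assume p: "p \<in> Restr grid_le S"
    then obtain x y where xy: "p = (x,y)" "x \<in> S" "y \<in> S" "length x = length y" "\<forall>i<length x. x!i \<le> y!i"
      unfolding grid_le_def by auto
    have "x \<le> y" using xy lex_le_list by simp
    moreover have "length x = D" using xy assms unfolding grid_def by auto
    ultimately show "p \<in> S \<times> S \<inter> (\<Inter>i<D. lexL S i)" using xy
      unfolding lexL_def by (auto simp: less_eq_prod_def)
  qed
  show ?thesis
    apply (rule exI[of _ D])
    apply (rule exI[of _ "lexL S"])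
    using A B by simp
qed

lemma std_example:
  assumes ext: "\<forall>i<k. linear_extension S R (Ls i)"
    and int: "(S \<times> S) \<inter> (\<Inter>i<k. Ls i) = R"
    and kd: "k \<le> d"
    and AB: "\<forall>i<Suc d. A i \<in> S \<and> B i \<in> S"
    and le: "\<forall>i<Suc d. \<forall>j<Suc d. i \<noteq> j \<longrightarrow> (A i, B j) \<in> R"
    and nle: "\<forall>i<Suc d. (A i, B i) \<notin> R"
    and refl: "\<forall>x\<in>S. (x,x) \<in> R"
  shows False
proof -
  have "\<forall>i<Suc d. \<exists>l<k. (A i, B i) \<notin> Ls l"
  proof (intro allI impI)
    fix i assume "i < Suc d"
    then have "(A i, B i) \<in> S \<times> S" "(A i, B i) \<notin> R" using AB nle by auto
    then show "\<exists>l<k. (A i, B i) \<notin> Ls l" using int by blast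
  qed
  then obtain c where c: "\<forall>i<Suc d. c i < k \<and> (A i, B i) \<notin> Ls (c i)" by metis
  have "\<not> inj_on c {..<Suc d}"
  proof
    assume "inj_on c {..<Suc d}"
    then have "card (c ` {..<Suc d}) = Suc d" by (simp add: card_image)
    moreover have "c ` {..<Suc d} \<subseteq> {..<k}" using c by auto
    then have "card (c ` {..<Suc d}) \<le> k" by (metis card_lessThan card_mono finite_lessThan)
    ultimately show False using kd by simp
  qed
  then obtain i j where ij: "i < Suc d" "j < Suc d" "i \<noteq> j" "c i = c j"
    unfolding inj_on_def by auto
  define L where "L = Ls (c i)"
  have lin: "linear_order_on S L" and RL: "R \<subseteq> L" using ext c ij unfolding L_def linear_extension_def by auto
  have ni: "(A i, B i) \<notin> L" and nj: "(A j, B j) \<notin> L" using c ij unfolding L_def by auto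
  have ne: "A i \<noteq> B i" "A j \<noteq> B j" using nle refl AB ij by metis+
  have tot: "total_on S L" and tr: "trans L" using lin
    unfolding linear_order_on_def partial_order_on_def preorder_on_def by auto
  have "(B j, A j) \<in> L" using tot ne nj AB ij unfolding total_on_def by blast
  moreover have "(A i, B j) \<in> L" "(A j, B i) \<in> L" using le ij RL by auto
  ultimately have "(A i, B i) \<in> L" using tr by (meson transD)
  then show False using ni by simp
qed



definition embeds :: "nat \<Rightarrow> nat list set \<Rightarrow> nat list set \<Rightarrow> bool" where
  "embeds D P S \<longleftrightarrow> (\<exists>f. (\<forall>u\<in>P. f u \<in> S) \<and>
      (\<forall>u\<in>P. \<forall>v\<in>P. \<forall>m<D. u!m < v!m \<longrightarrow> f u ! m < f v ! m))"

definition KMbound :: "nat \<Rightarrow> nat list set \<Rightarrow> nat \<Rightarrow> bool" where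
  "KMbound D P C \<longleftrightarrow> (\<forall>n S. S \<subseteq> grid n D \<longrightarrow> \<not> embeds D P S \<longrightarrow> card S \<le> C * n^(D-1))"

lemma len1: "length x = Suc 0 \<Longrightarrow> x = [x!0]"
  by (cases x) auto

lemma KM_base: assumes "finite P" shows "KMbound 1 P (card P)"
  unfolding KMbound_def
proof (intro allI impI)
  fix n S assume S: "S \<subseteq> grid n 1" and ne: "\<not> embeds 1 P S"
  show "card S \<le> card P * n ^ (1 - 1)"
  proof (rule ccontr)
    assume "\<not> ?thesis"
    then have lt: "card P < card S" by simp
    define K where "K = (\<lambda>x. x!0) ` S"
    have l1: "length x = Suc 0" if "x \<in> S" for x using S that unfolding grid_def by auto
    have "inj_on (\<lambda>x. x!0) S"
      by (rule inj_onI) (metis l1 len1)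
    then have cK: "card K = card S" unfolding K_def by (simp add: card_image)
    have fS: "finite S" using S finite_grid finite_subset by blast
    have fK: "finite K" unfolding K_def using fS by simp
    obtain \<rho> where \<rho>: "\<forall>u\<in>P. \<rho> u \<in> K" "\<forall>u\<in>P. \<forall>v\<in>P. u!0 < v!0 \<longrightarrow> \<rho> u < \<rho> v"
      using rank_embed[OF assms fK, of 0] lt cK by auto
    have "[\<rho> u] \<in> S" if "u \<in> P" for u
    proof -
      obtain x where "x \<in> S" "x!0 = \<rho> u" using \<rho>(1) \<open>u \<in> P\<close> unfolding K_def by force
      then show ?thesis using l1 len1 by metis
    qed
    then have "embeds 1 P S" unfolding embeds_def using \<rho>(2)
      by (intro exI[of _ "\<lambda>u. [\<rho> u]"]) auto
    then show False using ne by simp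
  qed
qed



lemma div_lt_imp_lt: "(a::nat) div t < b div t \<Longrightarrow> a < b"
  by (metis div_le_mono not_le)

lemma arith_t:
  fixes D k :: nat
  assumes "D \<ge> 1" "k \<ge> 1"
  shows "(Suc D * (k-1))^Suc D * 2^D + 1 \<le> (2 * (Suc D * k)^2)^D"
proof -
  define a where "a = Suc D * k"
  define X where "X = (Suc D * (k-1))^Suc D"
  have a1: "a \<ge> 1" using assms unfolding a_def by simp
  have "Suc D * (k-1) < a" unfolding a_def using assms by (intro mult_strict_left_mono) auto
  then have "(Suc D * (k-1))^Suc D < a^Suc D" by (rule power_strict_mono) simp_all
  also have "a^Suc D \<le> a^(2*D)" using a1 assms by (intro power_increasing) simp_all
  finally have "X + 1 \<le> a^(2*D)" unfolding X_def by simp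
  then have h1: "(X + 1) * 2^D \<le> a^(2*D) * 2^D" by (rule mult_right_mono) simp
  have h2: "X * 2^D + 1 \<le> (X+1) * 2^D" using one_le_power[of "2::nat" D] by (simp add: algebra_simps)
  have h3: "(2 * a^2)^D = a^(2*D) * 2^D"
  proof -
    have "(2*a^2)^D = 2^D * (a^2)^D" by (rule power_mult_distrib)
    moreover have "(a^2)^D = a^(2*D)" by (rule power_mult[symmetric])
    ultimately show ?thesis by simp
  qed
  have "X * 2^D + 1 \<le> (2 * a^2)^D" using h1 h2 h3 by linarith
  then show ?thesis unfolding X_def a_def .
qed



lemma KM_step:
  fixes D :: nat and P :: "nat list set"
  assumes D1: "D \<ge> 1" and fP: "finite P" and lP: "\<forall>u\<in>P. length u = Suc D"
    and IH: "\<forall>m<Suc D. KMbound D (del m ` P) (Cq m)"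
  shows "\<exists>C. KMbound (Suc D) P C"
proof (cases "P = {}")
  case True
  then have "embeds (Suc D) P S" for S unfolding embeds_def by auto
  then show ?thesis unfolding KMbound_def by auto
next
  case False
  define k where "k = card P"
  have k1: "k \<ge> 1" using False fP unfolding k_def by (simp add: Suc_le_eq card_gt_0_iff)
  define Cs where "Cs = (\<Sum>m<Suc D. Cq m)"
  define t where "t = 2 * (Suc D * k)^2"
  define M where "M = (Suc D * (k-1))^Suc D"
  define T where "T = (Suc D * t)^Suc D"
  define K0 where "K0 = T * (t choose k) * Cs"
  define C where "C = max t (K0 * 2^D)"
  have t2: "t \<ge> 2" unfolding t_def using k1 by simp
  have Mt: "M * 2^D + 1 \<le> t^D" unfolding M_def t_def using arith_t[OF D1 k1] .
  have main: "\<forall>S. S \<subseteq> grid n (Suc D) \<longrightarrow> \<not> embeds (Suc D) P S \<longrightarrow> card S \<le> C * n^D" for n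
  proof (induction n rule: less_induct)
    case (less n)
    show ?case
    proof (intro allI impI)
      fix S assume S: "S \<subseteq> grid n (Suc D)" and nS: "\<not> embeds (Suc D) P S"
      have fS: "finite S" using S finite_grid finite_subset by blast
      show "card S \<le> C * n^D"
      proof (cases "n < t")
        case True
        have "card S \<le> card (grid n (Suc D))" using S by (simp add: card_mono)
        also have "\<dots> = n * n^D" by (simp add: card_grid)
        also have "\<dots> \<le> t * n^D" using True by simp
        also have "\<dots> \<le> C * n^D" unfolding C_def by simp
        finally show ?thesis .
      next
        case False
        then have nt: "n \<ge> t" by simp
        define N where "N = (n - 1) div t + 1"
        have Nn: "N < n"
        proof -
          have "(n-1) div t < n - 1" using nt t2 by (intro div_less_dividend) auto
          then show ?thesis unfolding N_def by simp
        qed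
        have tN: "t * N \<le> 2 * n"
        proof -
          have h: "t * ((n-1) div t) \<le> n - 1" by simp
          have h2: "t*N = t + t*((n-1) div t)" unfolding N_def by simp
          have h3: "n - 1 < n" using nt t2 by simp
          show ?thesis using h h2 h3 nt by linarith
        qed
        define blk where "blk x = map (\<lambda>v. v div t) x" for x :: "nat list"
        define B where "B = blk ` S"
        have lS: "length x = Suc D" if "x \<in> S" for x using S that unfolding grid_def by auto
        have blk_nth: "blk x ! m = x ! m div t" if "x \<in> S" "m < Suc D" for x m
          unfolding blk_def using lS[OF that(1)] that(2) by simp
        have BN: "B \<subseteq> grid N (Suc D)"
        proof
          fix b assume "b \<in> B"
          then obtain x where x: "x \<in> S" "b = blk x" unfolding B_def by auto
          have "x!i div t < N" if "i < Suc D" for i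
          proof -
            have "x!i < n" using S x that unfolding grid_def by auto
            then have "x!i div t \<le> (n-1) div t" by (intro div_le_mono) simp
            then show ?thesis unfolding N_def by simp
          qed
          then show "b \<in> grid N (Suc D)" using x lS unfolding grid_def blk_def by auto
        qed
        have fB: "finite B" unfolding B_def using fS by simp
        have lift: "x!m < y!m" if "x \<in> S" "y \<in> S" "m < Suc D" "blk x ! m < blk y ! m" for x y m
          using that blk_nth div_lt_imp_lt by metis
        have nB: "\<not> embeds (Suc D) P B"
        proof
          assume "embeds (Suc D) P B"
          then obtain f where f: "\<forall>u\<in>P. f u \<in> B"
             "\<forall>u\<in>P. \<forall>v\<in>P. \<forall>m<Suc D. u!m < v!m \<longrightarrow> f u ! m < f v ! m"
            unfolding embeds_def by blast
          have "\<forall>u\<in>P. \<exists>x\<in>S. blk x = f u"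
          proof
            fix u assume "u \<in> P"
            then have "f u \<in> blk ` S" using f(1) unfolding B_def by simp
            then show "\<exists>x\<in>S. blk x = f u" by (auto simp: image_iff)
          qed
          then obtain g where g: "\<forall>u\<in>P. g u \<in> S \<and> blk (g u) = f u" by metis
          have "embeds (Suc D) P S" unfolding embeds_def
          proof (intro exI[of _ g] conjI ballI allI impI)
            fix u assume "u \<in> P" then show "g u \<in> S" using g by auto
          next
            fix u v m assume "u \<in> P" "v \<in> P" "m < Suc D" "u!m < v!m"
            then show "g u ! m < g v ! m" using f g lift by metis
          qed
          then show False using nS by simp
        qed
        have cB: "card B \<le> C * N^D" using less.IH[OF Nn] BN nB by blast
        define F where "F \<beta> = {x\<in>S. blk x = \<beta>}" for \<beta>
        define Vals where "Vals m \<beta> = (\<lambda>x. x!m) ` F \<beta>" for m \<beta>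
        have fF: "finite (F \<beta>)" for \<beta> unfolding F_def using fS by simp
        have fV: "finite (Vals m \<beta>)" for m \<beta> unfolding Vals_def using fF by simp
        have Vint: "Vals m \<beta> \<subseteq> {\<beta>!m*t ..< \<beta>!m*t + t}" if "m < Suc D" for m \<beta>
        proof
          fix v assume "v \<in> Vals m \<beta>"
          then obtain x where x: "x \<in> S" "blk x = \<beta>" "v = x!m" unfolding Vals_def F_def by auto
          then have "v div t = \<beta>!m" using blk_nth[OF x(1) that] by simp
          then show "v \<in> {\<beta>!m*t ..< \<beta>!m*t + t}" using t2
            by (metis atLeastLessThan_iff div_times_less_eq_dividend dividend_less_times_div
                  le_add_diff_inverse2 mult.commute add.commute less_diff_conv2 zero_less_numeral less_le_trans 
                  dividend_less_div_times)
        qed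
        have cardV_t: "card (Vals m \<beta>) \<le> t" if "m < Suc D" for m \<beta>
          using card_mono[OF _ Vint[OF that, of \<beta>]] by simp
        have cardF: "card (F \<beta>) \<le> (Suc D * c)^Suc D" if "\<forall>m<Suc D. card (Vals m \<beta>) \<le> c" for \<beta> c
        proof -
          define U where "U = (\<Union>m<Suc D. Vals m \<beta>)"
          have fU: "finite U" unfolding U_def using fV by simp
          have "card U \<le> (\<Sum>m<Suc D. card (Vals m \<beta>))" unfolding U_def by (rule card_UN_le) simp
          also have "\<dots> \<le> (\<Sum>m<Suc D. c)" using that by (intro sum_mono) simp
          finally have cU: "card U \<le> Suc D * c" by simp
          have "F \<beta> \<subseteq> {xs. set xs \<subseteq> U \<and> length xs = Suc D}"
          proof
            fix x assume x: "x \<in> F \<beta>"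
            then have lx: "length x = Suc D" using lS unfolding F_def by auto
            have "x!i \<in> U" if "i < Suc D" for i
              using x that unfolding U_def Vals_def by auto
            then have "set x \<subseteq> U" using lx by (auto simp: in_set_conv_nth)
            then show "x \<in> {xs. set xs \<subseteq> U \<and> length xs = Suc D}" using lx by simp
          qed
          then have "card (F \<beta>) \<le> card {xs. set xs \<subseteq> U \<and> length xs = Suc D}"
            using fU by (intro card_mono) (simp_all add: finite_lists_length_eq)
          also have "\<dots> = card U ^ Suc D" using fU by (simp add: card_lists_length_eq)
          also have "\<dots> \<le> (Suc D * c)^Suc D" by (rule power_mono[OF cU]) simp
          finally show ?thesis .
        qed
        define W where "W = {\<beta>\<in>B. \<exists>m<Suc D. k \<le> card (Vals m \<beta>)}"
        have SF: "S = (\<Union>\<beta>\<in>B. F \<beta>)" unfolding F_def B_def by auto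
        have "card S \<le> (\<Sum>\<beta>\<in>B. card (F \<beta>))" by (subst SF) (rule card_UN_le[OF fB])
        also have "\<dots> \<le> (\<Sum>\<beta>\<in>B. M + (if \<beta> \<in> W then T else 0))"
        proof (rule sum_mono)
          fix \<beta> assume "\<beta> \<in> B"
          show "card (F \<beta>) \<le> M + (if \<beta> \<in> W then T else 0)"
          proof (cases "\<beta> \<in> W")
            case True
            have "card (F \<beta>) \<le> (Suc D * t)^Suc D" using cardF cardV_t by blast
            then show ?thesis using True unfolding T_def by simp
          next
            case False
            then have "\<forall>m<Suc D. card (Vals m \<beta>) \<le> k - 1" using \<open>\<beta> \<in> B\<close> unfolding W_def by auto
            then have "card (F \<beta>) \<le> M" unfolding M_def by (rule cardF)
            then show ?thesis by simp
          qed
        qed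
        also have "\<dots> = M * card B + T * card W"
          unfolding W_def using fB by (simp add: sum.distrib sum.inter_filter[symmetric] mult.commute)
        finally have cS1: "card S \<le> M * card B + T * card W" .
        have keyW: "card {\<beta>\<in>B. \<beta>!m = s \<and> K \<subseteq> Vals m \<beta>} \<le> Cq m * N^(D-1)"
          if m: "m < Suc D" and cK: "card K = k" for m s K
        proof -
          define W' where "W' = {\<beta>\<in>B. \<beta>!m = s \<and> K \<subseteq> Vals m \<beta>}"
          have fK: "finite K" using cK k1 by (metis card.infinite not_one_le_zero)
          have nW: "\<not> embeds D (del m ` P) (del m ` W')"
          proof
            assume "embeds D (del m ` P) (del m ` W')"
            then obtain g where g: "\<forall>u\<in>del m ` P. g u \<in> del m ` W'"
              "\<forall>u\<in>del m ` P. \<forall>v\<in>del m ` P. \<forall>i<D. u!i < v!i \<longrightarrow> g u ! i < g v ! i"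
              unfolding embeds_def by blast
            have "\<forall>u\<in>P. \<exists>\<beta>\<in>W'. del m \<beta> = g (del m u)"
            proof
              fix u assume "u\<in>P"
              then have "g (del m u) \<in> del m ` W'" using g(1) by simp
              then show "\<exists>\<beta>\<in>W'. del m \<beta> = g (del m u)" by (auto simp: image_iff)
            qed
            then obtain bf where bf: "\<forall>u\<in>P. bf u \<in> W' \<and> del m (bf u) = g (del m u)" by metis
            obtain \<rho> where \<rho>: "\<forall>u\<in>P. \<rho> u \<in> K" "\<forall>u\<in>P. \<forall>v\<in>P. u!m < v!m \<longrightarrow> \<rho> u < \<rho> v"
              using rank_embed[OF fP fK, of m] cK unfolding k_def by auto
            have "\<forall>u\<in>P. \<exists>x\<in>F (bf u). x!m = \<rho> u"
            proof
              fix u assume u: "u\<in>P"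
              then have "\<rho> u \<in> Vals m (bf u)" using \<rho>(1) bf unfolding W'_def by auto
              then show "\<exists>x\<in>F (bf u). x!m = \<rho> u" unfolding Vals_def by (auto simp: image_iff)
            qed
            then obtain xf where xf: "\<forall>u\<in>P. xf u \<in> F (bf u) \<and> xf u ! m = \<rho> u" by metis
            have xS: "xf u \<in> S" "blk (xf u) = bf u" if "u\<in>P" for u using xf that unfolding F_def by auto
            have bfB: "bf u \<in> B" if "u\<in>P" for u using bf that unfolding W'_def by auto
            have lbf: "length (bf u) = Suc D" if "u\<in>P" for u using BN bfB[OF that] unfolding grid_def by auto
            have "embeds (Suc D) P S" unfolding embeds_def
            proof (intro exI[of _ xf] conjI ballI allI impI)
              fix u assume "u\<in>P" then show "xf u \<in> S" using xS by simp
            next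
              fix u v m' assume uv: "u\<in>P" "v\<in>P" "m' < Suc D" "u!m' < v!m'"
              show "xf u ! m' < xf v ! m'"
              proof (cases "m' = m")
                case True then show ?thesis using uv \<rho> xf by auto
              next
                case False
                obtain i where i: "i < D" "\<forall>y::nat list. length y = Suc D \<longrightarrow> del m y ! i = y ! m'"
                  using del_coord[OF m uv(3) False] by blast
                have e1: "del m u ! i = u ! m'" using i(2) lP uv(1) by blast
                have e2: "del m v ! i = v ! m'" using i(2) lP uv(2) by blast
                have "del m u ! i < del m v ! i" using e1 e2 uv(4) by simp
                then have "g (del m u) ! i < g (del m v) ! i" using g(2) uv i by blast
                then have "del m (bf u) ! i < del m (bf v) ! i" using bf uv by simp
                then have "bf u ! m' < bf v ! m'" using i lbf uv by simp
                then have "blk (xf u) ! m' < blk (xf v) ! m'" using xS uv by simp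
                then show ?thesis using lift xS uv by blast
              qed
            qed
            then show False using nS by simp
          qed
          have WN: "del m ` W' \<subseteq> grid N D" using BN del_grid m unfolding W'_def by blast
          have "card (del m ` W') \<le> Cq m * N^(D-1)"
            using IH m WN nW unfolding KMbound_def by blast
          moreover have "inj_on (del m) W'"
          proof (rule inj_onI)
            fix x y assume xy: "x\<in>W'" "y\<in>W'" "del m x = del m y"
            moreover have "length x = Suc D" "length y = Suc D"
              using xy BN unfolding W'_def grid_def by auto
            ultimately show "x = y" using del_inj[of x y m] m unfolding W'_def by auto
          qed
          ultimately show ?thesis unfolding W'_def[symmetric] by (simp add: card_image)
        qed
        have cWm: "card {\<beta>\<in>B. k \<le> card (Vals m \<beta>)} \<le> (t choose k) * Cq m * N^D" if m: "m < Suc D" for m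
        proof -
          define Ks where "Ks s = {K. K \<subseteq> {s*t..<s*t+t} \<and> card K = k}" for s
          have fKs: "finite (Ks s)" for s unfolding Ks_def
            by (rule finite_subset[of _ "Pow {s*t..<s*t+t}"]) auto
          have cKs: "card (Ks s) = t choose k" for s unfolding Ks_def by (subst n_subsets) simp_all
          define U where "U = (\<Union>s<N. \<Union>K\<in>Ks s. {\<beta>\<in>B. \<beta>!m = s \<and> K \<subseteq> Vals m \<beta>})"
          have sub: "{\<beta>\<in>B. k \<le> card (Vals m \<beta>)} \<subseteq> U"
          proof
            fix \<beta> assume \<beta>: "\<beta> \<in> {\<beta>\<in>B. k \<le> card (Vals m \<beta>)}"
            then have sN: "\<beta>!m < N" using BN m unfolding grid_def by auto
            obtain K where K: "K \<subseteq> Vals m \<beta>" "card K = k" using \<beta> obtain_subset_with_card_n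
              by (metis mem_Collect_eq)
            have "K \<in> Ks (\<beta>!m)" using K Vint[OF m, of \<beta>] unfolding Ks_def by auto
            then show "\<beta> \<in> U" unfolding U_def using sN K \<beta> by blast
          qed
          have fU: "finite U" unfolding U_def by (rule finite_subset[OF _ fB]) auto
          have "card {\<beta>\<in>B. k \<le> card (Vals m \<beta>)} \<le> card U" by (rule card_mono[OF fU sub])
          also have "\<dots> \<le> (\<Sum>s<N. card (\<Union>K\<in>Ks s. {\<beta>\<in>B. \<beta>!m = s \<and> K \<subseteq> Vals m \<beta>}))"
            unfolding U_def by (rule card_UN_le) simp
          also have "\<dots> \<le> (\<Sum>s<N. \<Sum>K\<in>Ks s. card {\<beta>\<in>B. \<beta>!m = s \<and> K \<subseteq> Vals m \<beta>})"
            by (intro sum_mono card_UN_le fKs)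
          also have "\<dots> \<le> (\<Sum>s<N. \<Sum>K\<in>Ks s. Cq m * N^(D-1))"
            by (intro sum_mono keyW[OF m]) (simp add: Ks_def)
          also have "\<dots> = N * ((t choose k) * (Cq m * N^(D-1)))" by (simp add: cKs)
          also have "\<dots> = (t choose k) * Cq m * N^D" using D1 by (cases D) (simp_all add: algebra_simps)
          finally show ?thesis .
        qed
        have "W = (\<Union>m<Suc D. {\<beta>\<in>B. k \<le> card (Vals m \<beta>)})" unfolding W_def by auto
        then have "card W \<le> (\<Sum>m<Suc D. card {\<beta>\<in>B. k \<le> card (Vals m \<beta>)})"
          using card_UN_le[of "{..<Suc D}" "\<lambda>m. {\<beta>\<in>B. k \<le> card (Vals m \<beta>)}"] by simp
        also have "\<dots> \<le> (\<Sum>m<Suc D. (t choose k) * Cq m * N^D)" by (intro sum_mono cWm) simp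
        also have "\<dots> = (t choose k) * Cs * N^D" unfolding Cs_def
          by (simp only: sum_distrib_right[symmetric] sum_distrib_left[symmetric])
        finally have cW: "card W \<le> (t choose k) * Cs * N^D" .
        have "M * card B \<le> M * (C * N^D)" using cB by simp
        moreover have "T * card W \<le> T * ((t choose k) * Cs * N^D)" using cW by simp
        ultimately have "card S \<le> M * (C * N^D) + T * ((t choose k) * Cs * N^D)" using cS1 by linarith
        also have "\<dots> = (M*C + K0) * N^D" unfolding K0_def by (simp add: algebra_simps)
        finally have c1: "card S \<le> (M*C + K0) * N^D" .
        have K0C: "K0 * 2^D \<le> C" unfolding C_def by simp
        have c2: "(M*C + K0) * 2^D \<le> C * t^D"
        proof -
          have "(M*C + K0) * 2^D = C*(M*2^D) + K0*2^D" by (simp add: algebra_simps)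
          also have "\<dots> \<le> C*(M*2^D) + C" using K0C by simp
          also have "\<dots> = C*(M*2^D+1)" by simp
          also have "\<dots> \<le> C * t^D" using Mt by (rule mult_left_mono) simp
          finally show ?thesis .
        qed
        have "card S * t^D \<le> (M*C + K0) * N^D * t^D" using c1 by (rule mult_right_mono) simp
        also have "\<dots> = (M*C + K0) * (t*N)^D" by (simp add: power_mult_distrib algebra_simps)
        also have "\<dots> \<le> (M*C + K0) * (2*n)^D" using tN by (intro mult_left_mono power_mono) simp_all
        also have "\<dots> = ((M*C + K0) * 2^D) * n^D" by (simp add: power_mult_distrib algebra_simps)
        also have "\<dots> \<le> (C * t^D) * n^D" using c2 by (rule mult_right_mono) simp
        also have "\<dots> = (C * n^D) * t^D" by (simp add: algebra_simps)
        finally have "card S * t^D \<le> (C * n^D) * t^D" .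
        moreover have "t^D > 0" using t2 by simp
        ultimately show ?thesis by (meson mult_le_cancel2 not_gr0)
      qed
    qed
  qed
  show ?thesis unfolding KMbound_def using main by auto
qed



theorem KM: "D \<ge> 1 \<Longrightarrow> finite P \<Longrightarrow> \<forall>u\<in>P. length u = D \<Longrightarrow> \<exists>C. KMbound D P C"
proof (induction D arbitrary: P)
  case 0 then show ?case by simp
next
  case (Suc D)
  show ?case
  proof (cases "D = 0")
    case True then show ?thesis using KM_base[OF Suc.prems(2)] by auto
  next
    case False
    have "\<forall>m<Suc D. \<exists>C. KMbound D (del m ` P) C"
    proof (intro allI impI)
      fix m assume m: "m < Suc D"
      have "\<forall>u\<in>del m ` P. length u = D" using Suc.prems(3) m by auto
      then show "\<exists>C. KMbound D (del m ` P) C"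
        using Suc.IH[of "del m ` P"] False Suc.prems(2) by auto
    qed
    then obtain Cq where "\<forall>m<Suc D. KMbound D (del m ` P) (Cq m)" by metis
    then show ?thesis using KM_step[of D P Cq] False Suc.prems by auto
  qed
qed

definition aPt :: "nat \<Rightarrow> nat \<Rightarrow> nat list" where
  "aPt D i = map (\<lambda>m. if m = i then 2 else 0) [0..<D]"
definition bPt :: "nat \<Rightarrow> nat \<Rightarrow> nat list" where
  "bPt D j = map (\<lambda>m. if m = j then 1 else 3) [0..<D]"
definition PiS :: "nat \<Rightarrow> nat list set" where
  "PiS D = aPt D ` {..<D} \<union> bPt D ` {..<D}"

theorem mainTheorem4:
  shows "\<forall>d::nat. d \<ge> 1 \<longrightarrow> (\<exists>C::real. \<forall>n::nat. n \<ge> 1 \<longrightarrow>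
           (\<forall>S. S \<subseteq> grid n (d + 1) \<longrightarrow> order_dim S (Restr grid_le S) \<le> d \<longrightarrow>
              real (card S) \<le> C * real n ^ d))"
proof (intro allI impI)
  fix d :: nat assume d1: "d \<ge> 1"
  define D where "D = Suc d"
  have fin: "finite (PiS D)" unfolding PiS_def by simp
  have len: "\<forall>u\<in>PiS D. length u = D" unfolding PiS_def aPt_def bPt_def by auto
  obtain C where C: "KMbound D (PiS D) C" using KM[of D "PiS D"] fin len D_def by auto
  show "\<exists>C::real. \<forall>n::nat. n \<ge> 1 \<longrightarrow> (\<forall>S. S \<subseteq> grid n (d + 1) \<longrightarrow>
     order_dim S (Restr grid_le S) \<le> d \<longrightarrow> real (card S) \<le> C * real n ^ d)"
  proof (intro exI[of _ "real C"] allI impI)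
    fix n S assume n: "n \<ge> 1" and S: "S \<subseteq> grid n (d+1)" and od: "order_dim S (Restr grid_le S) \<le> d"
    have lS: "length x = D" if "x \<in> S" for x using S that unfolding grid_def D_def by auto
    have ne: "\<not> embeds D (PiS D) S"
    proof
      assume "embeds D (PiS D) S"
      then obtain f where f: "\<forall>u\<in>PiS D. f u \<in> S"
          "\<forall>u\<in>PiS D. \<forall>v\<in>PiS D. \<forall>m<D. u!m < v!m \<longrightarrow> f u ! m < f v ! m"
        unfolding embeds_def by blast
      have ex: "\<exists>k::nat. \<exists>Ls. (\<forall>i<k. linear_extension S (Restr grid_le S) (Ls i)) \<and>
          (S \<times> S) \<inter> (\<Inter>i<k. Ls i) = Restr grid_le S" by (rule order_dim_exists[OF S])
      have "\<exists>Ls. (\<forall>i<order_dim S (Restr grid_le S). linear_extension S (Restr grid_le S) (Ls i)) \<and>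
          (S \<times> S) \<inter> (\<Inter>i<order_dim S (Restr grid_le S). Ls i) = Restr grid_le S"
        unfolding order_dim_def by (rule LeastI_ex[OF ex])
      then obtain Ls where Ls: "\<forall>i<order_dim S (Restr grid_le S). linear_extension S (Restr grid_le S) (Ls i)"
          "(S \<times> S) \<inter> (\<Inter>i<order_dim S (Restr grid_le S). Ls i) = Restr grid_le S" by blast
      have aP: "aPt D i \<in> PiS D" "bPt D i \<in> PiS D" if "i < D" for i using that unfolding PiS_def by auto
      have an: "aPt D i ! m = (if m = i then 2 else 0)" "bPt D i ! m = (if m = i then 1 else 3)"
        if "m < D" for i m using that unfolding aPt_def bPt_def by auto
      show False
      proof (rule std_example[OF Ls od, of "\<lambda>i. f (aPt D i)" "\<lambda>i. f (bPt D i)"])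
        show "\<forall>i<Suc d. f (aPt D i) \<in> S \<and> f (bPt D i) \<in> S" using f(1) aP D_def by auto
      next
        show "\<forall>i<Suc d. \<forall>j<Suc d. i \<noteq> j \<longrightarrow> (f (aPt D i), f (bPt D j)) \<in> Restr grid_le S"
        proof (intro allI impI)
          fix i j assume ij: "i < Suc d" "j < Suc d" "i \<noteq> j"
          have lt: "f (aPt D i) ! m < f (bPt D j) ! m" if "m < D" for m
          proof -
            have "aPt D i ! m < bPt D j ! m" using an[OF that] ij by auto
            then show ?thesis using f(2) aP ij that D_def by blast
          qed
          have inS: "f (aPt D i) \<in> S" "f (bPt D j) \<in> S" using f(1) aP ij D_def by auto
          then show "(f (aPt D i), f (bPt D j)) \<in> Restr grid_le S"
            using lt lS unfolding grid_le_def by (auto intro: less_imp_le)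
        qed
      next
        show "\<forall>i<Suc d. (f (aPt D i), f (bPt D i)) \<notin> Restr grid_le S"
        proof (intro allI impI)
          fix i assume i: "i < Suc d"
          have "bPt D i ! i < aPt D i ! i" using an[of i i] i D_def by simp
          then have "f (bPt D i) ! i < f (aPt D i) ! i" using f(2) aP i D_def by blast
          moreover have "length (f (aPt D i)) = D" using lS f(1) aP i D_def by auto
          ultimately show "(f (aPt D i), f (bPt D i)) \<notin> Restr grid_le S"
            unfolding grid_le_def using i D_def by (auto simp: not_le)
        qed
      next
        show "\<forall>x\<in>S. (x, x) \<in> Restr grid_le S" unfolding grid_le_def by auto
      qed
    qed
    have "card S \<le> C * n^(D-1)" using C S ne unfolding KMbound_def D_def by auto
    then have "card S \<le> C * n^d" unfolding D_def by simp
    then show "real (card S) \<le> real C * real n ^ d" by (metis of_nat_le_iff of_nat_mult of_nat_power)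
  qed
qed

end
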